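(* Let $d=2$, let $\widetilde{\mathcal{A}}$ be a measurable subset of $\mathbb{R}^+$ and $\mathcal{A}=\{x\in\mathbb{R}^2:|x|\in\widetilde{\mathcal{A}}\}$. Then there is an absolute constant $C$ such that for all $x\in\mathbb{R}^2$, $$M_{[1,2]}\chi_{\mathcal{A}}(x)\le C\Big([U\chi_{\widetilde{\mathcal{A}}}(|x|)]^{1/2}+[R\chi_{\widetilde{\mathcal{A}}}(|x|)]^{1/2}\Big),$$ where, for functions $f$ on $\mathbb{R}^+$, $$Uf(r)=\chi_{(1/2,\infty)}(r)\sup_{t\in[1,2],\ t<2r}\frac1r\int_{|r-t|}^{r+t}zf(z)\,dz,\qquad Rf(r)=\chi_{[0,1]}(r)\sup_{t\in[1,2],\ t\ge2r}\frac1r\int_{t-r}^{t+r}f(z)\,dz.$$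
   Context: $M_{[1,2]}f(x)=\sup_{t\in[1,2]}\left|\int_{\mathbb{S}^1}f(x-ty)\,d\sigma(y)\right|$ with $\sigma$ the normalized arc-length measure on $\mathbb{S}^1$; $\chi_S$ is the indicator function of $S$. *)

theory Defs
  imports "HOL-Analysis.Analysis"
begin

text \<open>R^2 is modelled as real \<times> real (Euclidean norm). The normalized arc-length
 measure on S^1 is written via the parametrization theta \<mapsto> (cos theta, sin theta).\<close>

definition circle_avg :: "(real \<times> real \<Rightarrow> real) \<Rightarrow> real \<times> real \<Rightarrow> real \<Rightarrow> real" where
  "circle_avg f x t =
     (1 / (2 * pi)) * (LINT \<theta>:{0..2*pi}|lebesgue. f (x - t *\<^sub>R (cos \<theta>, sin \<theta>)))"

definition M12 :: "(real \<times> real \<Rightarrow> real) \<Rightarrow> real \<times> real \<Rightarrow> real" where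
  "M12 f x = (SUP t\<in>{1..2}. \<bar>circle_avg f x t\<bar>)"

definition opU :: "(real \<Rightarrow> real) \<Rightarrow> real \<Rightarrow> real" where
  "opU f r = indicator {1/2<..} r *
     (SUP t\<in>{t. 1 \<le> t \<and> t \<le> 2 \<and> t < 2 * r}.
        (1 / r) * (LINT z:{\<bar>r - t\<bar>..r + t}|lebesgue. z * f z))"

definition opR :: "(real \<Rightarrow> real) \<Rightarrow> real \<Rightarrow> real" where
  "opR f r = indicator {0..1} r *
     (SUP t\<in>{t. 1 \<le> t \<and> t \<le> 2 \<and> 2 * r \<le> t}.
        (1 / r) * (LINT z:{t - r..t + r}|lebesgue. f z))"

end

theory Submission
  imports Defs
begin

lemma sin_ge_half: fixes v::real assumes "0 \<le> v" "v \<le> pi/3" shows "v/2 \<le> sin v"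
proof -
  have "sin 0 - 0/2 \<le> sin v - v/2"
  proof (rule DERIV_nonneg_imp_nondecreasing[of 0 v "\<lambda>v. sin v - v/2"])
    fix y assume y: "0 \<le> y" "y \<le> v"
    show "\<exists>y'. ((\<lambda>v. sin v - v/2) has_real_derivative y') (at y) \<and> 0 \<le> y'"
    proof (intro exI conjI)
      show "((\<lambda>v. sin v - v/2) has_real_derivative (cos y - 1/2)) (at y)"
        by (auto intro!: derivative_eq_intros)
      have "cos (pi/3) \<le> cos y"
        using y assms by (intro cos_monotone_0_pi_le) auto
      then show "0 \<le> cos y - 1/2" by (simp add: cos_60)
    qed
  qed (use assms in auto)
  then show ?thesis by simp
qed

lemma abs_sin_shift: "\<bar>sin (u - of_int k * pi)\<bar> = \<bar>sin u\<bar>"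
proof -
  have s: "sin (of_int k * pi) = 0" by (metis mult.commute sin_npi_int)
  then have "(cos (of_int k * pi))^2 = 1" using sin_cos_squared_add[of "of_int k * pi"] by simp
  then have "\<bar>cos (of_int k * pi)\<bar> = 1" by (metis abs_power2 power2_eq_1_iff abs_1 abs_neg_one)
  then show ?thesis by (simp add: sin_diff s abs_mult)
qed

lemma sin_abs_eq: fixes v::real assumes "\<bar>v\<bar> \<le> pi" shows "sin \<bar>v\<bar> = \<bar>sin v\<bar>"
proof (cases "v \<ge> 0")
  case True then show ?thesis using sin_ge_zero[of v] assms by simp
next
  case False then show ?thesis using sin_ge_zero[of "-v"] assms by simp
qed

lemma near_multiple: fixes u \<delta> :: real assumes "\<bar>sin u\<bar> < \<delta>" "\<delta> \<le> 1/2"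
  shows "\<exists>k::int. \<bar>u - of_int k * pi\<bar> < 2*\<delta>"
proof -
  define k where "k = \<lfloor>u/pi + 1/2\<rfloor>"
  define v where "v = u - of_int k * pi"
  have "of_int k \<le> u/pi + 1/2" "u/pi + 1/2 < of_int k + 1" unfolding k_def by linarith+
  then have v1: "-pi/2 \<le> v" "v \<le> pi/2" unfolding v_def using pi_gt_zero
    by (auto simp: field_simps)
  have sv: "\<bar>sin v\<bar> < \<delta>" using abs_sin_shift assms(1) v_def by simp
  have "\<bar>v\<bar> < 2*\<delta>"
  proof (cases "\<bar>v\<bar> \<le> pi/3")
    case True
    have "\<bar>v\<bar>/2 \<le> sin \<bar>v\<bar>" using True by (intro sin_ge_half) auto
    also have "sin \<bar>v\<bar> = \<bar>sin v\<bar>" using v1 by (intro sin_abs_eq) auto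
    finally show ?thesis using sv by linarith
  next
    case False
    have "sin (pi/3) \<le> sin \<bar>v\<bar>" using False v1
      by (intro sin_monotone_2pi_le) auto
    also have "sin \<bar>v\<bar> = \<bar>sin v\<bar>" using v1 by (intro sin_abs_eq) auto
    finally have "sqrt 3 / 2 < \<delta>" using sv by (simp add: sin_60)
    moreover have "1 \<le> sqrt 3" by simp
    ultimately show ?thesis using assms by linarith
  qed
  then show ?thesis unfolding v_def by blast
qed


lemma small_sin_meas: fixes \<psi> \<delta> :: real assumes "0 \<le> \<psi>" "\<psi> < 2*pi" "0 < \<delta>"
  shows "measure lebesgue {\<theta>\<in>{0..2*pi}. \<bar>sin (\<theta>-\<psi>)\<bar> < \<delta>} \<le> 20*\<delta>"
proof -
  let ?T = "{\<theta>\<in>{0..2*pi}. \<bar>sin (\<theta>-\<psi>)\<bar> < \<delta>}"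
  have Tm: "?T \<in> sets lebesgue"
  proof -
    have "open {\<theta>::real. \<bar>sin (\<theta>-\<psi>)\<bar> < \<delta>}"
      by (intro open_Collect_less continuous_intros)
    then have "{\<theta>::real. \<bar>sin (\<theta>-\<psi>)\<bar> < \<delta>} \<in> sets lebesgue" by (simp add: borel_open)
    moreover have "?T = {0..2*pi} \<inter> {\<theta>::real. \<bar>sin (\<theta>-\<psi>)\<bar> < \<delta>}" by auto
    ultimately show ?thesis by simp
  qed
  show ?thesis
  proof (cases "\<delta> \<le> 1/2")
    case False
    have "measure lebesgue ?T \<le> measure lebesgue {0..2*pi}"
      by (intro measure_mono_fmeasurable Tm) auto
    also have "\<dots> = 2*pi" by simp
    finally show ?thesis using False pi_less_4 by linarith
  next
    case True
    let ?I = "\<lambda>k::int. {\<psi> + of_int k * pi - 2*\<delta> .. \<psi> + of_int k * pi + 2*\<delta>}"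
    have sub: "?T \<subseteq> (\<Union>k\<in>{-2..2}. ?I k)"
    proof
      fix \<theta> assume th: "\<theta> \<in> ?T"
      then obtain k::int where k: "\<bar>\<theta> - \<psi> - of_int k * pi\<bar> < 2*\<delta>"
        using near_multiple[of "\<theta>-\<psi>" \<delta>] True by auto
      have "of_int k * pi < 2*pi + 1" "-2*pi - 1 < of_int k * pi"
        using k th assms True by auto
      then have "of_int k * pi < 3 * pi" "-3*pi < of_int k * pi"
        using pi_gt3 by linarith+
      then have "of_int k * pi < of_int 3 * pi" "of_int (-3) * pi < of_int k * pi" by simp_all
      then have "of_int k < (of_int 3::real)" "of_int (-3) < (of_int k::real)"
        using pi_gt_zero mult_less_cancel_right_pos by blast+
      then have "k < 3" "-3 < k" by simp_all
      then have "k \<in> {-2..2}" by auto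
      moreover have "\<theta> \<in> ?I k" using k by auto
      ultimately show "\<theta> \<in> (\<Union>k\<in>{-2..2}. ?I k)" by blast
    qed
    have "measure lebesgue ?T \<le> measure lebesgue (\<Union>k\<in>{-2..2}. ?I k)"
      by (intro measure_mono_fmeasurable Tm sub) (auto intro!: fmeasurable.finite_UN)
    also have "\<dots> \<le> (\<Sum>k\<in>{-2..2::int}. measure lebesgue (?I k))"
      by (intro measure_UNION_le) auto
    also have "\<dots> = (\<Sum>k\<in>{-2..2::int}. 4*\<delta>)"
      using assms by (intro sum.cong) auto
    also have "\<dots> = 20*\<delta>" by simp
    finally show ?thesis .
  qed
qed



lemma piece_meas:
  fixes c e \<psi> \<delta> :: real and k :: int and S A2 :: "real set"
  assumes c: "c > 0" and d: "\<delta> > 0" and Sm: "S \<in> sets lebesgue" and Ssub: "S \<subseteq> {0..2*pi}"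
    and piece: "\<And>\<theta>. \<theta> \<in> S \<Longrightarrow> of_int k * pi \<le> \<theta> - \<psi> \<and> \<theta> - \<psi> \<le> of_int k * pi + pi \<and> \<delta> \<le> \<bar>sin (\<theta> - \<psi>)\<bar>"
    and img: "(\<lambda>\<theta>. e + c * cos (\<theta> - \<psi>)) ` S \<subseteq> A2" and A2: "A2 \<in> lmeasurable"
  shows "c * \<delta> * measure lebesgue S \<le> measure lebesgue A2"
proof -
  define G where "G = (\<lambda>\<theta>. e + c * cos (\<theta> - \<psi>))"
  define G' where "G' = (\<lambda>\<theta>. - (c * sin (\<theta> - \<psi>)))"
  have der: "(G has_field_derivative G' \<theta>) (at \<theta> within S)" for \<theta>
    unfolding G_def G'_def by (auto intro!: derivative_eq_intros)
  have ck: "cos (\<theta> - \<psi> - of_int k * pi) = cos (\<theta> - \<psi>) * cos (of_int k * pi)" for \<theta>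
  proof -
    have s: "sin (of_int k * pi) = 0" by (metis mult.commute sin_npi_int)
    show ?thesis by (simp add: cos_diff s)
  qed
  have ckn: "cos (of_int k * pi) \<noteq> 0"
  proof
    assume "cos (of_int k * pi) = 0"
    moreover have "sin (of_int k * pi) = 0" by (metis mult.commute sin_npi_int)
    ultimately show False using sin_cos_squared_add[of "of_int k * pi"] by simp
  qed
  have inj: "inj_on G S"
  proof (rule inj_onI)
    fix a b assume ab: "a \<in> S" "b \<in> S" "G a = G b"
    then have "cos (a - \<psi>) = cos (b - \<psi>)" using c unfolding G_def by simp
    then have "cos (a - \<psi> - of_int k * pi) = cos (b - \<psi> - of_int k * pi)" by (simp only: ck)
    moreover have "0 \<le> a - \<psi> - of_int k * pi" "a - \<psi> - of_int k * pi \<le> pi"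
      "0 \<le> b - \<psi> - of_int k * pi" "b - \<psi> - of_int k * pi \<le> pi"
      using piece[OF ab(1)] piece[OF ab(2)] by linarith+
    ultimately have "a - \<psi> - of_int k * pi = b - \<psi> - of_int k * pi"
      using cos_inj_pi by blast
    then show "a = b" by simp
  qed
  have Sl: "S \<in> lmeasurable" by (rule fmeasurableI2[of "{0..2*pi}", OF _ Ssub Sm]) simp
  have ai0: "(\<lambda>\<theta>. \<bar>G' \<theta>\<bar> * 1) absolutely_integrable_on {0..2*pi}"
    unfolding G'_def by (intro absolutely_integrable_continuous_real continuous_intros)
  have ai: "(\<lambda>\<theta>. \<bar>G' \<theta>\<bar> * 1) absolutely_integrable_on S"
    by (rule set_integrable_subset[OF ai0 Sm Ssub])
  note cv = has_absolute_integral_change_of_variables_1'[OF Sm der inj, of "\<lambda>_. 1" "integral S (\<lambda>\<theta>. \<bar>G' \<theta>\<bar> * 1)"]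
  have cv2: "(\<lambda>_. 1::real) absolutely_integrable_on G ` S \<and> integral (G ` S) (\<lambda>_. 1::real) = integral S (\<lambda>\<theta>. \<bar>G' \<theta>\<bar> * 1)"
    by (rule cv[THEN iffD1, OF conjI[OF ai refl]])
  have ieq: "integral (G ` S) (\<lambda>_. 1::real) = integral S (\<lambda>\<theta>. \<bar>G' \<theta>\<bar> * 1)"
    using cv2 by blast
  have GSl: "G ` S \<in> lmeasurable" using cv2
    using lmeasurable_iff_integrable_on set_lebesgue_integral_eq_integral(1) by blast
  have "c * \<delta> * measure lebesgue S = integral S (\<lambda>_. c * \<delta>)"
    using lmeasure_integral[OF Sl] integral_mult_right[of S "c*\<delta>" "\<lambda>_. 1::real"] by (simp only: mult_1_right)
  also have "\<dots> \<le> integral S (\<lambda>\<theta>. \<bar>G' \<theta>\<bar> * 1)"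
  proof (rule integral_le)
    show "(\<lambda>_. c * \<delta>) integrable_on S" using Sl by (rule integrable_on_const)
    show "(\<lambda>\<theta>. \<bar>G' \<theta>\<bar> * 1) integrable_on S" using ai set_lebesgue_integral_eq_integral(1) by blast
    fix \<theta> assume "\<theta> \<in> S"
    then have "\<delta> \<le> \<bar>sin (\<theta> - \<psi>)\<bar>" using piece by blast
    then show "c * \<delta> \<le> \<bar>G' \<theta>\<bar> * 1" unfolding G'_def using c by (simp add: abs_mult)
  qed
  also have "\<dots> = measure lebesgue (G ` S)" using ieq lmeasure_integral[OF GSl] by simp
  also have "\<dots> \<le> measure lebesgue A2"
    by (rule measure_mono_fmeasurable[OF _ fmeasurableD[OF GSl] A2]) (use img in \<open>simp add: G_def\<close>)
  finally show ?thesis .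
qed



lemma A2_meas:
  fixes A :: "real set" and a b :: real
  assumes Am: "A \<in> sets lebesgue" and a: "0 \<le> a"
  shows "(\<lambda>z. z^2/2) ` (A \<inter> {a..b}) \<in> lmeasurable"
    and "(LINT z:{a..b}|lebesgue. z * indicator A z) = measure lebesgue ((\<lambda>z. z^2/2) ` (A \<inter> {a..b}))"
proof -
  define D where "D = A \<inter> {a..b}"
  have Dm: "D \<in> sets lebesgue" unfolding D_def using Am by (intro sets.Int) auto
  have der: "((\<lambda>z. z^2/2) has_field_derivative z) (at z within D)" for z
    by (auto intro!: derivative_eq_intros)
  have inj: "inj_on (\<lambda>z::real. z^2/2) D"
  proof (rule inj_onI)
    fix x y assume "x \<in> D" "y \<in> D" "x^2/2 = y^2/2"
    then show "x = y" unfolding D_def using a by (auto simp: power2_eq_iff)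
  qed
  have ai0: "(\<lambda>z::real. z) absolutely_integrable_on {a..b}"
    by (intro absolutely_integrable_continuous_real continuous_intros)
  have ai: "(\<lambda>z::real. z) absolutely_integrable_on D"
    by (rule set_integrable_subset[OF ai0 Dm]) (auto simp: D_def)
  have ai1: "(\<lambda>z::real. \<bar>z\<bar> * 1) absolutely_integrable_on D"
    using ai by (simp add: absolutely_integrable_on_def set_integrable_abs)
  note cv = has_absolute_integral_change_of_variables_1'[OF Dm der inj, of "\<lambda>_. 1" "integral D (\<lambda>z. \<bar>z\<bar> * 1)"]
  have cv2: "(\<lambda>_. 1::real) absolutely_integrable_on (\<lambda>z. z^2/2) ` D \<and> integral ((\<lambda>z. z^2/2) ` D) (\<lambda>_. 1::real) = integral D (\<lambda>z. \<bar>z\<bar> * 1)"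
    by (rule cv[THEN iffD1, OF conjI[OF ai1 refl]])
  have l: "(\<lambda>z. z^2/2) ` D \<in> lmeasurable" using cv2
    using lmeasurable_iff_integrable_on set_lebesgue_integral_eq_integral(1) by blast
  then show "(\<lambda>z. z^2/2) ` (A \<inter> {a..b}) \<in> lmeasurable" unfolding D_def .
  have "(LINT z:{a..b}|lebesgue. z * indicator A z) = (LINT z:D|lebesgue. z)"
    unfolding set_lebesgue_integral_def D_def
    by (intro Bochner_Integration.integral_cong) (auto simp: indicator_def)
  also have "\<dots> = integral D (\<lambda>z. z)" using ai by (rule set_lebesgue_integral_eq_integral(2))
  also have "\<dots> = integral D (\<lambda>z. \<bar>z\<bar> * 1)"
    by (intro integral_cong) (use a in \<open>auto simp: D_def\<close>)
  also have "\<dots> = measure lebesgue ((\<lambda>z. z^2/2) ` D)"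
    using cv2 lmeasure_integral[OF l] by simp
  finally show "(LINT z:{a..b}|lebesgue. z * indicator A z) = measure lebesgue ((\<lambda>z. z^2/2) ` (A \<inter> {a..b}))"
    unfolding D_def .
qed



lemma norm_identity:
  fixes x :: "real \<times> real" and r t \<psi> \<theta> :: real
  assumes "fst x = - (r * cos \<psi>)" "snd x = - (r * sin \<psi>)"
  shows "(norm (x - t *\<^sub>R (cos \<theta>, sin \<theta>)))^2 = r^2 + t^2 + 2*r*t*cos (\<theta> - \<psi>)"
proof -
  obtain x1 x2 where x: "x = (x1, x2)" by (cases x)
  have "(norm (x - t *\<^sub>R (cos \<theta>, sin \<theta>)))^2 = (x1 - t * cos \<theta>)^2 + (x2 - t * sin \<theta>)^2"
    by (simp add: x norm_Pair)
  also have "\<dots> = r^2 + t^2 + 2*r*t*cos (\<theta> - \<psi>)"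
  proof -
    have h1: "cos \<psi> * cos \<psi> + sin \<psi> * sin \<psi> = 1" "cos \<theta> * cos \<theta> + sin \<theta> * sin \<theta> = 1" by simp_all
    have x1: "x1 = - (r * cos \<psi>)" "x2 = - (r * sin \<psi>)" using assms x by auto
    show ?thesis unfolding x1 cos_diff power2_eq_square using h1 by algebra
  qed
  finally show ?thesis .
qed


lemma circle_bound:
  fixes A :: "real set" and x :: "real \<times> real" and t :: real
  assumes Am: "A \<in> sets lebesgue" and x0: "x \<noteq> 0" and t1: "1 \<le> t" and t2: "t \<le> 2"
  shows "\<bar>circle_avg (indicator {y. norm y \<in> A}) x t\<bar>
     \<le> 4 * sqrt ((1 / norm x) * (LINT z:{\<bar>norm x - t\<bar>..norm x + t}|lebesgue. z * indicator A z))"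
proof -
  define r where "r = norm x"
  have r0: "r > 0" using x0 by (simp add: r_def)
  obtain x1 x2 where x: "x = (x1, x2)" by (cases x)
  have rr: "r^2 = x1^2 + x2^2" by (simp add: r_def x norm_Pair)
  have "(-x1/r)^2 + (-x2/r)^2 = (x1^2 + x2^2)/r^2" by (simp add: power_divide add_divide_distrib)
  also have "\<dots> = 1" using rr r0 by (metis div_self less_irrefl zero_less_power2)
  finally have "(-x1/r)^2 + (-x2/r)^2 = 1" .
  then obtain \<psi> where psi: "0 \<le> \<psi>" "\<psi> < 2*pi" "-x1/r = cos \<psi>" "-x2/r = sin \<psi>"
    using sincos_total_2pi by blast
  have fx: "fst x = - (r * cos \<psi>)" "snd x = - (r * sin \<psi>)"
    using psi(3,4) r0 by (auto simp: x field_simps)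
  define S where "S = {\<theta>\<in>{0..2*pi}. norm (x - t *\<^sub>R (cos \<theta>, sin \<theta>)) \<in> A}"
  have avg: "circle_avg (indicator {y. norm y \<in> A}) x t = measure lebesgue S / (2*pi)"
  proof -
    have "(\<lambda>\<theta>. indicator {0..2*pi} \<theta> *\<^sub>R indicator {y. norm y \<in> A} (x - t *\<^sub>R (cos \<theta>, sin \<theta>)))
        = (indicator S :: real \<Rightarrow> real)"
      by (auto simp: S_def indicator_def)
    then show ?thesis unfolding circle_avg_def set_lebesgue_integral_def by simp
  qed
  define a where "a = \<bar>r - t\<bar>"
  define b where "b = r + t"
  define A2 where "A2 = (\<lambda>z. z^2/2) ` (A \<inter> {a..b})"
  have A2l: "A2 \<in> lmeasurable" unfolding A2_def a_def by (rule A2_meas(1)[OF Am]) simp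
  have Leq: "(LINT z:{a..b}|lebesgue. z * indicator A z) = measure lebesgue A2"
    unfolding A2_def a_def by (rule A2_meas(2)[OF Am]) simp
  define m where "m = measure lebesgue A2"
  have m0: "0 \<le> m" by (simp add: m_def)
  have rhs: "(1 / norm x) * (LINT z:{\<bar>norm x - t\<bar>..norm x + t}|lebesgue. z * indicator A z) = m / r"
    using Leq by (simp add: m_def a_def b_def r_def)
  have Q0: "0 \<le> m / r" using m0 r0 by simp
  have main: "measure lebesgue S \<le> 24 * sqrt (m / r)"
  proof (cases "S \<in> sets lebesgue")
    case False
    then show ?thesis using Q0 by (simp add: measure_notin_sets)
  next
    case Sm: True
    have key: "measure lebesgue S \<le> 20*\<delta> + 4 * ((m/r)/\<delta>)" if d: "\<delta> > 0" for \<delta>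
    proof -
      define T where "T = {\<theta>\<in>{0..2*pi}. \<bar>sin (\<theta>-\<psi>)\<bar> < \<delta>}"
      define P where "P = (\<lambda>k::int. S \<inter> {\<theta>. of_int k * pi \<le> \<theta> - \<psi> \<and> \<theta> - \<psi> \<le> of_int k * pi + pi \<and> \<delta> \<le> \<bar>sin (\<theta> - \<psi>)\<bar>})"
      have Tm: "T \<in> sets lebesgue"
      proof -
        have "open {\<theta>::real. \<bar>sin (\<theta>-\<psi>)\<bar> < \<delta>}"
          by (intro open_Collect_less continuous_intros)
        then have "{\<theta>::real. \<bar>sin (\<theta>-\<psi>)\<bar> < \<delta>} \<in> sets lebesgue" by (simp add: borel_open)
        moreover have "T = {0..2*pi} \<inter> {\<theta>::real. \<bar>sin (\<theta>-\<psi>)\<bar> < \<delta>}" by (auto simp: T_def)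
        ultimately show ?thesis by simp
      qed
      have Pm: "P k \<in> sets lebesgue" for k
      proof -
        have "closed {\<theta>::real. of_int k * pi \<le> \<theta> - \<psi> \<and> \<theta> - \<psi> \<le> of_int k * pi + pi \<and> \<delta> \<le> \<bar>sin (\<theta> - \<psi>)\<bar>}"
          by (intro closed_Collect_conj closed_Collect_le continuous_intros)
        then have "{\<theta>::real. of_int k * pi \<le> \<theta> - \<psi> \<and> \<theta> - \<psi> \<le> of_int k * pi + pi \<and> \<delta> \<le> \<bar>sin (\<theta> - \<psi>)\<bar>} \<in> sets lebesgue"
          by (simp add: borel_closed)
        then show ?thesis unfolding P_def using Sm by (intro sets.Int) auto
      qed
      have Pb: "measure lebesgue (P k) \<le> (m/r)/\<delta>" for k
      proof -
        have img: "(\<lambda>\<theta>. (r^2+t^2)/2 + (r*t) * cos (\<theta> - \<psi>)) ` P k \<subseteq> A2"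
        proof
          fix u assume "u \<in> (\<lambda>\<theta>. (r^2+t^2)/2 + (r*t) * cos (\<theta> - \<psi>)) ` P k"
          then obtain \<theta> where th: "\<theta> \<in> P k" and u: "u = (r^2+t^2)/2 + (r*t) * cos (\<theta> - \<psi>)" by blast
          define n where "n = norm (x - t *\<^sub>R (cos \<theta>, sin \<theta>))"
          have nA: "n \<in> A" using th by (simp add: P_def S_def n_def)
          have ne: "norm (t *\<^sub>R (cos \<theta>, sin \<theta>)) = t" using t1 by (simp add: norm_Pair power_mult_distrib flip: distrib_left)
          have "n \<le> r + t" unfolding n_def r_def using norm_triangle_ineq4[of x "t *\<^sub>R (cos \<theta>, sin \<theta>)"] ne by simp
          moreover have "\<bar>r - t\<bar> \<le> n" unfolding n_def r_def using norm_triangle_ineq3[of x "t *\<^sub>R (cos \<theta>, sin \<theta>)"] ne by simp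
          moreover have "u = n^2/2" unfolding u n_def norm_identity[OF fx] by (simp add: field_simps)
          ultimately show "u \<in> A2" unfolding A2_def a_def b_def using nA by auto
        qed
        have "(r*t) * \<delta> * measure lebesgue (P k) \<le> measure lebesgue A2"
        proof (rule piece_meas[OF _ d Pm _ _ img A2l])
          show "0 < r * t" using r0 t1 by simp
          show "P k \<subseteq> {0..2*pi}" by (auto simp: P_def S_def)
          fix \<theta> assume "\<theta> \<in> P k"
          then show "of_int k * pi \<le> \<theta> - \<psi> \<and> \<theta> - \<psi> \<le> of_int k * pi + pi \<and> \<delta> \<le> \<bar>sin (\<theta> - \<psi>)\<bar>"
            by (simp add: P_def)
        qed
        then have "measure lebesgue (P k) \<le> m / ((r*t)*\<delta>)"
          using r0 t1 d by (simp add: m_def field_simps)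
        also have "\<dots> \<le> m / (r*\<delta>)"
          using r0 t1 d m0 by (intro divide_left_mono) (auto intro!: mult_pos_pos)
        finally show ?thesis by simp
      qed
      have cover: "S \<subseteq> T \<union> (\<Union>k\<in>{-2..1}. P k)"
      proof
        fix \<theta> assume th: "\<theta> \<in> S"
        then have th02: "0 \<le> \<theta>" "\<theta> \<le> 2*pi" by (auto simp: S_def)
        show "\<theta> \<in> T \<union> (\<Union>k\<in>{-2..1}. P k)"
        proof (cases "\<bar>sin (\<theta>-\<psi>)\<bar> < \<delta>")
          case True then show ?thesis using th02 by (auto simp: T_def)
        next
          case False
          have "\<exists>k::int\<in>{-2..1}. of_int k * pi \<le> \<theta> - \<psi> \<and> \<theta> - \<psi> \<le> of_int k * pi + pi"
          proof -
            consider "\<theta> - \<psi> \<le> -pi" | "-pi \<le> \<theta> - \<psi> \<and> \<theta> - \<psi> \<le> 0" | "0 \<le> \<theta> - \<psi> \<and> \<theta> - \<psi> \<le> pi"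
              | "pi \<le> \<theta> - \<psi>" by linarith
            then show ?thesis
            proof cases
              case 1 then have "of_int (-2::int) * pi \<le> \<theta> - \<psi> \<and> \<theta> - \<psi> \<le> of_int (-2::int) * pi + pi" using th02 psi(1,2) by simp
              then show ?thesis by (intro bexI[of _ "-2"]) simp_all
            next
              case 2 then have "of_int (-1::int) * pi \<le> \<theta> - \<psi> \<and> \<theta> - \<psi> \<le> of_int (-1::int) * pi + pi" by simp
              then show ?thesis by (intro bexI[of _ "-1"]) simp_all
            next
              case 3 then have "of_int (0::int) * pi \<le> \<theta> - \<psi> \<and> \<theta> - \<psi> \<le> of_int (0::int) * pi + pi" by simp
              then show ?thesis by (intro bexI[of _ "0"]) simp_all
            next
              case 4 then have "of_int (1::int) * pi \<le> \<theta> - \<psi> \<and> \<theta> - \<psi> \<le> of_int (1::int) * pi + pi" using th02 psi(1,2) by simp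
              then show ?thesis by (intro bexI[of _ "1"]) simp_all
            qed
          qed
          then obtain k where k: "k \<in> {-2..1}" "of_int k * pi \<le> \<theta> - \<psi> \<and> \<theta> - \<psi> \<le> of_int k * pi + pi" by blast
          have "\<theta> \<in> P k" unfolding P_def using th False k(2) by simp
          then show ?thesis using k(1) by blast
        qed
      qed
      have Um: "(\<Union>k\<in>{-2..1}. P k) \<in> sets lebesgue" using Pm by auto
      have TUf: "T \<union> (\<Union>k\<in>{-2..1}. P k) \<in> lmeasurable"
      proof (rule fmeasurableI2[of "{0..2*pi}"])
        show "{0..2*pi} \<in> lmeasurable" by simp
        have "T \<subseteq> {0..2*pi}" unfolding T_def by blast
        moreover have "P k \<subseteq> {0..2*pi}" for k unfolding P_def S_def by blast
        ultimately show "T \<union> (\<Union>k\<in>{-2..1}. P k) \<subseteq> {0..2*pi}" by blast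
        show "T \<union> (\<Union>k\<in>{-2..1}. P k) \<in> sets lebesgue" using Tm Um by (rule sets.Un)
      qed
      have "measure lebesgue S \<le> measure lebesgue (T \<union> (\<Union>k\<in>{-2..1}. P k))"
        by (rule measure_mono_fmeasurable[OF cover Sm TUf])
      also have "\<dots> \<le> measure lebesgue T + measure lebesgue (\<Union>k\<in>{-2..1}. P k)"
        by (rule measure_Un_le[OF Tm Um])
      also have "measure lebesgue T \<le> 20*\<delta>" unfolding T_def by (rule small_sin_meas[OF psi(1,2) d])
      also have "measure lebesgue (\<Union>k\<in>{-2..1}. P k) \<le> (\<Sum>k\<in>{-2..1::int}. measure lebesgue (P k))"
        by (rule measure_UNION_le) (use Pm in auto)
      also have "\<dots> \<le> (\<Sum>k\<in>{-2..1::int}. (m/r)/\<delta>)" by (intro sum_mono Pb)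
      also have "\<dots> = 4 * ((m/r)/\<delta>)" by simp
      finally show ?thesis by simp
    qed
    show ?thesis
    proof (cases "m / r = 0")
      case True
      have "measure lebesgue S \<le> 0"
      proof (rule ccontr)
        assume "\<not> measure lebesgue S \<le> 0"
        then have pos: "measure lebesgue S > 0" by simp
        have "measure lebesgue S \<le> 20 * (measure lebesgue S / 40)"
          using key[of "measure lebesgue S / 40"] pos True by simp
        then show False using pos by simp
      qed
      then show ?thesis by (simp only: True real_sqrt_zero mult_zero_right)
    next
      case False
      then have Qp: "m / r > 0" using Q0 by linarith
      have sq: "sqrt (m/r) > 0" using Qp by simp
      have "measure lebesgue S \<le> 20 * sqrt (m/r) + 4 * ((m/r) / sqrt (m/r))"
        using key[OF sq] .
      also have "(m/r) / sqrt (m/r) = sqrt (m/r)"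
        using Qp by (metis real_div_sqrt less_imp_le)
      finally show ?thesis by simp
    qed
  qed
  have "\<bar>circle_avg (indicator {y. norm y \<in> A}) x t\<bar> = measure lebesgue S / (2*pi)"
    using avg by simp
  also have "\<dots> \<le> 24 * sqrt (m / r) / (2*pi)"
    using main by (intro divide_right_mono) auto
  also have "\<dots> \<le> 4 * sqrt (m / r)"
  proof -
    have q0: "0 \<le> sqrt (m / r)" using Q0 by simp
    have h: "3 * sqrt (m / r) \<le> pi * sqrt (m / r)" using pi_gt3 q0 by (intro mult_right_mono) auto
    have "24 * sqrt (m / r) \<le> 4 * sqrt (m / r) * (2*pi)"
      using h by (simp add: algebra_simps)
    then show ?thesis using pi_gt_zero by (simp add: divide_le_eq)
  qed
  finally show ?thesis using rhs by simp
qed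



lemma lint_facts:
  fixes A :: "real set" and a b :: real
  assumes Am: "A \<in> sets lebesgue" and a: "0 \<le> a" and ab: "a \<le> b"
  shows "0 \<le> (LINT z:{a..b}|lebesgue. z * indicator A z)"
    and "(LINT z:{a..b}|lebesgue. z * indicator A z) \<le> b * measure lebesgue (A \<inter> {a..b})"
    and "(LINT z:{a..b}|lebesgue. indicator A z) = measure lebesgue (A \<inter> {a..b})"
    and "measure lebesgue (A \<inter> {a..b}) \<le> b - a"
proof -
  show "0 \<le> (LINT z:{a..b}|lebesgue. z * indicator A z)"
    using A2_meas(2)[OF Am a, of b] by simp
  define D where "D = A \<inter> {a..b}"
  have Dm: "D \<in> sets lebesgue" unfolding D_def using Am by (intro sets.Int) auto
  have Dl: "D \<in> lmeasurable" by (rule fmeasurableI2[of "{a..b}", OF _ _ Dm]) (auto simp: D_def)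
  have ai0: "(\<lambda>z::real. z) absolutely_integrable_on {a..b}"
    by (intro absolutely_integrable_continuous_real continuous_intros)
  have ai: "(\<lambda>z::real. z) absolutely_integrable_on D"
    by (rule set_integrable_subset[OF ai0 Dm]) (auto simp: D_def)
  have "(LINT z:{a..b}|lebesgue. z * indicator A z) = (LINT z:D|lebesgue. z)"
    unfolding set_lebesgue_integral_def D_def
    by (intro Bochner_Integration.integral_cong) (auto simp: indicator_def)
  also have "\<dots> = integral D (\<lambda>z. z)" using ai by (rule set_lebesgue_integral_eq_integral(2))
  also have "\<dots> \<le> integral D (\<lambda>z. b)"
  proof (rule integral_le)
    show "(\<lambda>z. z) integrable_on D" using ai set_lebesgue_integral_eq_integral(1) by blast
    show "(\<lambda>z. b) integrable_on D" using Dl by (rule integrable_on_const)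
  qed (auto simp: D_def)
  also have "\<dots> = b * measure lebesgue D"
    using lmeasure_integral[OF Dl] integral_mult_right[of D b "\<lambda>_. 1::real"] by (simp only: mult_1_right)
  finally show "(LINT z:{a..b}|lebesgue. z * indicator A z) \<le> b * measure lebesgue (A \<inter> {a..b})"
    unfolding D_def .
  have "(\<lambda>z. indicator {a..b} z *\<^sub>R indicator A z) = (indicator D :: real \<Rightarrow> real)"
    by (auto simp: D_def indicator_def)
  then show "(LINT z:{a..b}|lebesgue. indicator A z) = measure lebesgue (A \<inter> {a..b})"
    unfolding set_lebesgue_integral_def D_def by simp
  have "measure lebesgue D \<le> measure lebesgue {a..b}"
    by (rule measure_mono_fmeasurable[OF _ Dm]) (auto simp: D_def)
  then show "measure lebesgue (A \<inter> {a..b}) \<le> b - a" using ab by (simp add: D_def)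
qed



theorem lemma3p1:
  shows "\<exists>C::real. \<forall>At::real set. At \<in> sets lebesgue \<longrightarrow> At \<subseteq> {0..} \<longrightarrow>
     (\<forall>x::real \<times> real. x \<noteq> 0 \<longrightarrow>
        M12 (indicator {y. norm y \<in> At}) x
          \<le> C * (sqrt (opU (indicator At) (norm x)) + sqrt (opR (indicator At) (norm x))))"
proof (intro exI[of _ 8] allI impI)
  fix At :: "real set" and x :: "real \<times> real"
  assume Am: "At \<in> sets lebesgue" and Apos: "At \<subseteq> {0..}" and x0: "x \<noteq> 0"
  define r where "r = norm x"
  have r0: "r > 0" using x0 by (simp add: r_def)
  define fU where "fU = (\<lambda>t. (1 / r) * (LINT z:{\<bar>r - t\<bar>..r + t}|lebesgue. z * indicator At z))"
  define fR where "fR = (\<lambda>t. (1 / r) * (LINT z:{t - r..t + r}|lebesgue. indicator At z))"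
  define IU where "IU = {t. 1 \<le> t \<and> t \<le> 2 \<and> t < 2 * r}"
  define IR where "IR = {t. 1 \<le> t \<and> t \<le> 2 \<and> 2 * r \<le> t}"
  have opU: "opU (indicator At) r = indicator {1/2<..} r * (SUP t\<in>IU. fU t)"
    unfolding opU_def fU_def IU_def by simp
  have opR: "opR (indicator At) r = indicator {0..1} r * (SUP t\<in>IR. fR t)"
    unfolding opR_def fR_def IR_def by simp
  have fU0: "0 \<le> fU t" if "1 \<le> t" for t
    unfolding fU_def using lint_facts(1)[OF Am, of "\<bar>r - t\<bar>" "r + t"] r0 that by simp
  have fUb: "fU t \<le> (r + 2) * 4 / r" if "1 \<le> t" "t \<le> 2" for t
  proof -
    have "(LINT z:{\<bar>r - t\<bar>..r + t}|lebesgue. z * indicator At z) \<le> (r + t) * measure lebesgue (At \<inter> {\<bar>r - t\<bar>..r + t})"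
      using lint_facts(2)[OF Am, of "\<bar>r - t\<bar>" "r + t"] r0 that by simp
    also have "\<dots> \<le> (r + 2) * 4"
    proof (rule mult_mono)
      have "\<bar>r - t\<bar> \<le> r + t" "r + t - \<bar>r - t\<bar> \<le> 4" using r0 that by (auto simp: abs_if)
      then show "measure lebesgue (At \<inter> {\<bar>r - t\<bar>..r + t}) \<le> 4"
        using lint_facts(4)[OF Am, of "\<bar>r - t\<bar>" "r + t"] by simp
    qed (use that r0 in auto)
    finally show ?thesis unfolding fU_def using r0 by (simp add: divide_right_mono)
  qed
  have fR0: "0 \<le> fR t" and fRb: "fR t \<le> 2" if "2 * r \<le> t" for t
  proof -
    have e: "(LINT z:{t - r..t + r}|lebesgue. indicator At z) = measure lebesgue (At \<inter> {t - r..t + r})"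
      using lint_facts(3)[OF Am, of "t - r" "t + r"] r0 that by simp
    have "measure lebesgue (At \<inter> {t - r..t + r}) \<le> 2 * r"
      using lint_facts(4)[OF Am, of "t - r" "t + r"] r0 that by simp
    then show "fR t \<le> 2" unfolding fR_def e using r0 by (simp add: field_simps)
    show "0 \<le> fR t" unfolding fR_def e using r0 by simp
  qed
  have bddU: "bdd_above (fU ` IU)"
  proof (rule bdd_aboveI[of _ "(r + 2) * 4 / r"])
    fix y assume "y \<in> fU ` IU"
    then obtain t where "t \<in> IU" "y = fU t" by blast
    then show "y \<le> (r + 2) * 4 / r" using fUb[of t] by (simp add: IU_def)
  qed
  have bddR: "bdd_above (fR ` IR)"
  proof (rule bdd_aboveI[of _ 2])
    fix y assume "y \<in> fR ` IR"
    then obtain t where "t \<in> IR" "y = fR t" by blast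
    then show "y \<le> 2" using fRb[of t] by (simp add: IR_def)
  qed
  have opU0: "0 \<le> opU (indicator At) r"
  proof (cases "r > 1/2")
    case True
    then have "1 \<in> IU" by (simp add: IU_def)
    then have "fU 1 \<le> (SUP t\<in>IU. fU t)" by (intro cSUP_upper bddU)
    then show ?thesis using fU0[of 1] True by (simp add: opU)
  next
    case False then show ?thesis by (simp add: opU)
  qed
  have opR0: "0 \<le> opR (indicator At) r"
  proof (cases "r \<le> 1")
    case True
    then have "2 \<in> IR" using r0 by (simp add: IR_def)
    then have "fR 2 \<le> (SUP t\<in>IR. fR t)" by (intro cSUP_upper bddR)
    then show ?thesis using fR0[of 2] True r0 by (simp add: opR)
  next
    case False then show ?thesis by (simp add: opR)
  qed
  have sU: "0 \<le> sqrt (opU (indicator At) r)" using opU0 by simp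
  have sR: "0 \<le> sqrt (opR (indicator At) r)" using opR0 by simp
  have pt: "\<bar>circle_avg (indicator {y. norm y \<in> At}) x t\<bar>
      \<le> 8 * (sqrt (opU (indicator At) r) + sqrt (opR (indicator At) r))" if t: "t \<in> {1..2}" for t
  proof -
    have cb: "\<bar>circle_avg (indicator {y. norm y \<in> At}) x t\<bar> \<le> 4 * sqrt (fU t)"
      using circle_bound[OF Am x0, of t] t unfolding fU_def r_def by simp
    show ?thesis
    proof (cases "t < 2 * r")
      case True
      then have tI: "t \<in> IU" using t by (simp add: IU_def)
      have r12: "r > 1/2" using True t by simp
      have "fU t \<le> (SUP t\<in>IU. fU t)" using tI by (intro cSUP_upper bddU)
      then have "fU t \<le> opU (indicator At) r" using r12 by (simp add: opU)
      then have "sqrt (fU t) \<le> sqrt (opU (indicator At) r)" by simp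
      then show ?thesis unfolding distrib_left using cb sU sR by linarith
    next
      case False
      then have tI: "t \<in> IR" using t by (simp add: IR_def)
      have r1: "r \<le> 1" using False t by simp
      have ab: "\<bar>r - t\<bar> = t - r" using False r0 by simp
      have "fR t \<le> (SUP t\<in>IR. fR t)" using tI by (intro cSUP_upper bddR)
      then have fRo: "fR t \<le> opR (indicator At) r" using r1 r0 by (simp add: opR)
      have "(LINT z:{t - r..t + r}|lebesgue. z * indicator At z) \<le> (t + r) * measure lebesgue (At \<inter> {t - r..t + r})"
        using lint_facts(2)[OF Am, of "t - r" "t + r"] r0 False by simp
      also have "\<dots> \<le> 3 * measure lebesgue (At \<inter> {t - r..t + r})"
        using r1 t by (intro mult_right_mono) auto
      also have "\<dots> = 3 * (LINT z:{t - r..t + r}|lebesgue. indicator At z)"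
        using lint_facts(3)[OF Am, of "t - r" "t + r"] r0 False by simp
      finally have "fU t \<le> 3 * fR t" unfolding fU_def fR_def ab using r0
        by (simp add: field_simps)
      also have "\<dots> \<le> 4 * opR (indicator At) r" using fRo fR0[of t] False by linarith
      finally have "sqrt (fU t) \<le> sqrt (4 * opR (indicator At) r)" by simp
      also have "\<dots> = 2 * sqrt (opR (indicator At) r)" by (simp add: real_sqrt_mult)
      finally show ?thesis unfolding distrib_left using cb sU sR by linarith
    qed
  qed
  show "M12 (indicator {y. norm y \<in> At}) x
          \<le> 8 * (sqrt (opU (indicator At) (norm x)) + sqrt (opR (indicator At) (norm x)))"
    unfolding M12_def r_def[symmetric] by (rule cSUP_least) (use pt in auto)
qed


end
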